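(* Let $f:\mathbb{R}^n\to\mathbb{R}_{>0}$ be a twice continuously differentiable convex function that is $\gamma$-second order robust and $\mu$-multiplicatively smooth with respect to the $\ell_2$ norm, for some $\gamma,\mu>0$. Let $\mathbf{x},\mathbf{x}^*\in\mathbb{R}^n$ and $R>0$ with $\|\mathbf{x}-\mathbf{x}^*\|_2\le R$. Let $\mathbf{x}'=\mathbf{x}-\eta\nabla f(\mathbf{x})$ with $\eta=\min\bigl\{\frac1{2\mu f(\mathbf{x})},\frac1{\gamma\|\nabla f(\mathbf{x})\|_2}\bigr\}$. If $f(\mathbf{x})>f(\mathbf{x}^* )$, then $$f(\mathbf{x})-f(\mathbf{x}')\ge\min\Bigl\{\frac{(f(\mathbf{x})-f(\mathbf{x}^* ))^2}{4\mu f(\mathbf{x})R^2},\frac{f(\mathbf{x})-f(\mathbf{x}^* )}{2\gamma R}\Bigr\},$$ and if moreover $f(\mathbf{x}')>f(\mathbf{x}^* )$ then $\|\mathbf{x}'-\mathbf{x}^*\|_2\le\|\mathbf{x}-\mathbf{x}^*\|_2$. If $f(\mathbf{x})\le f(\mathbf{x}^* )$, then $f(\mathbf{x}')\le f(\mathbf{x})$.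
   Context: $f$ is $q$-second order robust w.r.t. a norm $\|\cdot\|$ if $\|\mathbf{x}'-\mathbf{x}\|\le1/q$ implies $\tfrac12\nabla^2f(\mathbf{x})\preceq\nabla^2f(\mathbf{x}')\preceq2\nabla^2f(\mathbf{x})$; $f>0$ is $\mu$-multiplicatively smooth w.r.t. $\|\cdot\|$ if $\tilde{\mathbf{x}}^\top\nabla^2f(\mathbf{x})\tilde{\mathbf{x}}\le\mu f(\mathbf{x})\|\tilde{\mathbf{x}}\|^2$ for all $\mathbf{x},\tilde{\mathbf{x}}$. If $\nabla f(\mathbf{x})=\mathbf{0}$ the second term in the step size is read as $+\infty$. *)

theory Defs
  imports "HOL-Analysis.Analysis"
begin

definition loewner_le :: "real^'n^'n \<Rightarrow> real^'n^'n \<Rightarrow> bool" where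
  "loewner_le A B \<longleftrightarrow> (\<forall>v. v \<bullet> (A *v v) \<le> v \<bullet> (B *v v))"

definition second_order_robust :: "real \<Rightarrow> (real^'n \<Rightarrow> real^'n^'n) \<Rightarrow> bool" where
  "second_order_robust q Hess \<longleftrightarrow>
     (\<forall>x x'. norm (x' - x) \<le> 1 / q \<longrightarrow>
        loewner_le ((1/2) *\<^sub>R Hess x) (Hess x') \<and> loewner_le (Hess x') (2 *\<^sub>R Hess x))"

definition mult_smooth :: "real \<Rightarrow> (real^'n \<Rightarrow> real) \<Rightarrow> (real^'n \<Rightarrow> real^'n^'n) \<Rightarrow> bool" where
  "mult_smooth \<mu> f Hess \<longleftrightarrow>
     (\<forall>x v. v \<bullet> (Hess x *v v) \<le> \<mu> * f x * (norm v)\<^sup>2)"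

text \<open>Step size; when the gradient vanishes the second term is +infinity.\<close>
definition step_size :: "real \<Rightarrow> real \<Rightarrow> real \<Rightarrow> real^'n \<Rightarrow> real" where
  "step_size \<gamma> \<mu> fx g =
     (if g = 0 then 1 / (2 * \<mu> * fx) else min (1 / (2 * \<mu> * fx)) (1 / (\<gamma> * norm g)))"

end

theory Submission
  imports Defs
begin

lemma scaleR_mv: "((c::real) *\<^sub>R A) *v (v::real^'n) = c *\<^sub>R (A *v v)"
  by (simp add: vec_eq_iff matrix_vector_mult_def sum_distrib_left mult.assoc)

lemma tangent:
  fixes f :: "real^'n \<Rightarrow> real"
  assumes cvx: "convex_on UNIV f" and d: "(f has_derivative (\<lambda>v. g \<bullet> v)) (at x)"
  shows "f y \<ge> f x + g \<bullet> (y - x)"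
proof -
  define h where "h t = f (x + t *\<^sub>R (y - x))" for t
  have ch: "convex_on UNIV h"
  proof (rule convex_onI)
    fix t a b :: real assume "t > 0" "t < 1"
    have "x + ((1 - t) *\<^sub>R a + t *\<^sub>R b) *\<^sub>R (y - x)
        = (1 - t) *\<^sub>R (x + a *\<^sub>R (y - x)) + t *\<^sub>R (x + b *\<^sub>R (y - x))"
      by (simp add: algebra_simps)
    then show "h ((1 - t) *\<^sub>R a + t *\<^sub>R b) \<le> (1 - t) * h a + t * h b"
      unfolding h_def using convex_onD[OF cvx, of t] \<open>t > 0\<close> \<open>t < 1\<close> by simp
  qed simp
  have lin: "((\<lambda>t. x + t *\<^sub>R (y - x)) has_derivative (\<lambda>t. t *\<^sub>R (y - x))) (at 0)"
    by (auto intro!: derivative_eq_intros)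
  have hd: "(h has_derivative (\<lambda>t. g \<bullet> (t *\<^sub>R (y - x)))) (at 0)"
  proof -
    have d': "(f has_derivative (\<lambda>v. g \<bullet> v)) (at (x + 0 *\<^sub>R (y - x)))" using d by simp
    show ?thesis unfolding h_def using has_derivative_compose[OF lin d'] by simp
  qed
  then have hfd: "(h has_field_derivative (g \<bullet> (y - x))) (at 0)"
  proof -
    have e: "(\<lambda>t. g \<bullet> (t *\<^sub>R (y - x))) = (*) (g \<bullet> (y - x))" by (auto simp: fun_eq_iff)
    show ?thesis using hd unfolding has_field_derivative_def e .
  qed
  have "h 1 - h 0 \<ge> (g \<bullet> (y - x)) * (1 - 0)"
    using convex_on_imp_above_tangent[OF ch connected_UNIV, of 0 1 "g \<bullet> (y - x)"] hfd by simp
  then show ?thesis unfolding h_def by simp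
qed

lemma taylor2:
  fixes \<phi> \<phi>1 \<phi>2 :: "real \<Rightarrow> real"
  assumes d1: "\<And>t. (\<phi> has_real_derivative \<phi>1 t) (at t)"
    and d2: "\<And>t. (\<phi>1 has_real_derivative \<phi>2 t) (at t)"
    and bd: "\<And>t. 0 \<le> t \<Longrightarrow> t \<le> T \<Longrightarrow> \<phi>2 t \<le> M" and T: "T \<ge> 0"
  shows "\<phi> T \<le> \<phi> 0 + \<phi>1 0 * T + M * T\<^sup>2 / 2"
proof -
  have p1: "\<phi>1 t - \<phi>1 0 - M * t \<le> 0" if "0 \<le> t" "t \<le> T" for t
  proof -
    have "(\<lambda>t. \<phi>1 t - \<phi>1 0 - M * t) t \<le> (\<lambda>t. \<phi>1 t - \<phi>1 0 - M * t) 0"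
    proof (rule DERIV_nonpos_imp_nonincreasing[OF that(1)])
      fix s assume "0 \<le> s" "s \<le> t"
      show "\<exists>y. ((\<lambda>t. \<phi>1 t - \<phi>1 0 - M * t) has_real_derivative y) (at s) \<and> y \<le> 0"
        using bd[of s] \<open>0 \<le> s\<close> \<open>s \<le> t\<close> that
        by (intro exI[of _ "\<phi>2 s - 0 - M * 1"]) (auto intro!: derivative_eq_intros d2)
    qed
    then show ?thesis by simp
  qed
  have "(\<lambda>t. \<phi> t - \<phi> 0 - \<phi>1 0 * t - M * t\<^sup>2 / 2) T \<le> (\<lambda>t. \<phi> t - \<phi> 0 - \<phi>1 0 * t - M * t\<^sup>2 / 2) 0"
  proof (rule DERIV_nonpos_imp_nonincreasing[OF T])
    fix s assume "0 \<le> s" "s \<le> T"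
    show "\<exists>y. ((\<lambda>t. \<phi> t - \<phi> 0 - \<phi>1 0 * t - M * t\<^sup>2 / 2) has_real_derivative y) (at s) \<and> y \<le> 0"
      using p1[OF \<open>0 \<le> s\<close> \<open>s \<le> T\<close>]
      by (intro exI[of _ "\<phi>1 s - 0 - \<phi>1 0 * 1 - M * (2 * s) / 2"])
         (auto intro!: derivative_eq_intros d1 simp: power2_eq_square)
  qed
  then show ?thesis by simp
qed

lemma mv_scale: "(A::real^'n^'n) *v (c *\<^sub>R v) = c *\<^sub>R (A *v v)"
  by (simp add: vec_eq_iff matrix_vector_mult_def sum_distrib_left algebra_simps)

lemma mv_neg: "(A::real^'n^'n) *v (- v) = - (A *v v)"
  by (simp add: vec_eq_iff matrix_vector_mult_def sum_negf)

theorem lemma8: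
  fixes f :: "real^'n \<Rightarrow> real" and grad :: "real^'n \<Rightarrow> real^'n"
    and Hess :: "real^'n \<Rightarrow> real^'n^'n"
    and \<gamma> \<mu> R :: real and x xs :: "real^'n"
  assumes pos: "\<forall>y. f y > 0"
    and grad: "\<forall>y. (f has_derivative (\<lambda>v. grad y \<bullet> v)) (at y)"
    and hess: "\<forall>y. (grad has_derivative (\<lambda>v. Hess y *v v)) (at y)"
    and hess_cont: "continuous_on UNIV Hess"
    and cvx: "convex_on UNIV f"
    and gamma_pos: "\<gamma> > 0" and mu_pos: "\<mu> > 0"
    and robust: "second_order_robust \<gamma> Hess"
    and smooth: "mult_smooth \<mu> f Hess"
    and R_pos: "R > 0" and dist: "norm (x - xs) \<le> R"
  defines "x' \<equiv> x - step_size \<gamma> \<mu> (f x) (grad x) *\<^sub>R grad x"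
  shows "(f x > f xs \<longrightarrow>
            f x - f x' \<ge> min ((f x - f xs)\<^sup>2 / (4 * \<mu> * f x * R\<^sup>2))
                              ((f x - f xs) / (2 * \<gamma> * R))
          \<and> (f x' > f xs \<longrightarrow> norm (x' - xs) \<le> norm (x - xs)))
       \<and> (f x \<le> f xs \<longrightarrow> f x' \<le> f x)"
proof -
  define g where "g = grad x"
  define \<eta> where "\<eta> = step_size \<gamma> \<mu> (f x) g"
  have fx: "f x > 0" using pos by auto
  have x'_def2: "x' = x - \<eta> *\<^sub>R g" unfolding x'_def \<eta>_def g_def ..
  have eta_pos: "\<eta> > 0" using fx mu_pos gamma_pos
    by (auto simp: \<eta>_def step_size_def)
  have eta1: "\<eta> \<le> 1 / (2 * \<mu> * f x)" by (auto simp: \<eta>_def step_size_def)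
  have eta2: "g \<noteq> 0 \<Longrightarrow> \<eta> \<le> 1 / (\<gamma> * norm g)" by (auto simp: \<eta>_def step_size_def)
  have eta3: "\<eta> = 1 / (2 * \<mu> * f x) \<or> (g \<noteq> 0 \<and> \<eta> = 1 / (\<gamma> * norm g))"
    by (auto simp: \<eta>_def step_size_def min_def)
  have etag: "\<eta> * norm g \<le> 1 / \<gamma>"
  proof (cases "g = 0")
    case True then show ?thesis using gamma_pos by simp
  next
    case False
    then have "norm g > 0" by simp
    with eta2[OF False] gamma_pos show ?thesis by (simp add: field_simps)
  qed
  define p where "p t = x - t *\<^sub>R g" for t
  define \<phi> where "\<phi> t = f (p t)" for t
  define \<phi>1 where "\<phi>1 t = grad (p t) \<bullet> (- g)" for t
  define \<phi>2 where "\<phi>2 t = (Hess (p t) *v g) \<bullet> g" for t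
  have lin: "(p has_derivative (\<lambda>s. - (s *\<^sub>R g))) (at t)" for t
    unfolding p_def by (auto intro!: derivative_eq_intros)
  have d1: "(\<phi> has_real_derivative \<phi>1 t) (at t)" for t
  proof -
    have "(\<phi> has_derivative (\<lambda>s. grad (p t) \<bullet> (- (s *\<^sub>R g)))) (at t)"
      unfolding \<phi>_def using has_derivative_compose[OF lin grad[rule_format, of "p t"]] by simp
    moreover have "(\<lambda>s. grad (p t) \<bullet> (- (s *\<^sub>R g))) = (*) (\<phi>1 t)"
      by (auto simp: fun_eq_iff \<phi>1_def)
    ultimately show ?thesis unfolding has_field_derivative_def by simp
  qed
  have d2: "(\<phi>1 has_real_derivative \<phi>2 t) (at t)" for t
  proof -
    have "((\<lambda>t. grad (p t)) has_derivative (\<lambda>s. Hess (p t) *v (- (s *\<^sub>R g)))) (at t)"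
      using has_derivative_compose[OF lin hess[rule_format, of "p t"]] by simp
    from bounded_linear.has_derivative[OF bounded_linear_inner_left[of "- g"] this]
    have "(\<phi>1 has_derivative (\<lambda>s. (Hess (p t) *v (- (s *\<^sub>R g))) \<bullet> (- g))) (at t)"
      unfolding \<phi>1_def .
    moreover have "(\<lambda>s. (Hess (p t) *v (- (s *\<^sub>R g))) \<bullet> (- g)) = (*) (\<phi>2 t)"
      by (auto simp: fun_eq_iff \<phi>2_def mv_neg mv_scale)
    ultimately show ?thesis unfolding has_field_derivative_def by simp
  qed
  define M where "M = 2 * \<mu> * f x * (norm g)\<^sup>2"
  have bd: "\<phi>2 t \<le> M" if "0 \<le> t" "t \<le> \<eta>" for t
  proof -
    have "norm (p t - x) = t * norm g" using that by (simp add: p_def)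
    also have "\<dots> \<le> \<eta> * norm g" using that by (simp add: mult_right_mono)
    also have "\<dots> \<le> 1 / \<gamma>" by (rule etag)
    finally have "loewner_le (Hess (p t)) (2 *\<^sub>R Hess x)"
      using robust unfolding second_order_robust_def by blast
    then have "g \<bullet> (Hess (p t) *v g) \<le> g \<bullet> ((2 *\<^sub>R Hess x) *v g)"
      unfolding loewner_le_def by blast
    also have "\<dots> = 2 * (g \<bullet> (Hess x *v g))" by (simp add: scaleR_mv)
    also have "\<dots> \<le> 2 * (\<mu> * f x * (norm g)\<^sup>2)"
      using smooth unfolding mult_smooth_def by (simp)
    finally show ?thesis by (simp add: \<phi>2_def M_def inner_commute)
  qed
  have tay: "\<phi> \<eta> \<le> \<phi> 0 + \<phi>1 0 * \<eta> + M * \<eta>\<^sup>2 / 2"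
    by (rule taylor2[OF d1 d2 bd]) (use eta_pos in auto)
  have fx': "f x' = \<phi> \<eta>" by (simp add: \<phi>_def p_def x'_def2)
  have "\<phi> 0 = f x" by (simp add: \<phi>_def p_def)
  moreover have "\<phi>1 0 = - (norm g)\<^sup>2" by (simp add: \<phi>1_def p_def g_def power2_norm_eq_inner)
  ultimately have "f x - f x' \<ge> \<eta> * (norm g)\<^sup>2 - \<mu> * f x * (norm g)\<^sup>2 * \<eta>\<^sup>2"
    using tay fx' by (simp add: M_def algebra_simps)
  moreover have "\<mu> * f x * \<eta> \<le> 1/2" using eta1 fx mu_pos by (simp add: field_simps)
  then have "(\<mu> * f x * \<eta>) * ((norm g)\<^sup>2 * \<eta>) \<le> (1/2) * ((norm g)\<^sup>2 * \<eta>)"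
    by (rule mult_right_mono) (use eta_pos in simp)
  then have "\<mu> * f x * (norm g)\<^sup>2 * \<eta>\<^sup>2 \<le> (1/2) * (norm g)\<^sup>2 * \<eta>"
    by (simp add: power2_eq_square mult_ac)
  ultimately have D: "f x - f x' \<ge> \<eta> * (norm g)\<^sup>2 / 2"
    by (simp add: mult.commute[of "(norm g)\<^sup>2" \<eta>])
  have part3: "f x \<le> f xs \<longrightarrow> f x' \<le> f x"
  proof -
    have "\<eta> * (norm g)\<^sup>2 / 2 \<ge> 0" using eta_pos by simp
    then show ?thesis using D by linarith
  qed
  have part1: "f x' \<le> f x - min ((f x - f xs)\<^sup>2 / (4 * \<mu> * f x * R\<^sup>2))
                              ((f x - f xs) / (2 * \<gamma> * R))
          \<and> (f x' > f xs \<longrightarrow> norm (x' - xs) \<le> norm (x - xs))" if gt: "f x > f xs"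
  proof -
    define \<Delta> where "\<Delta> = f x - f xs"
    have Dp: "\<Delta> > 0" using gt by (simp add: \<Delta>_def)
    have "f xs \<ge> f x + g \<bullet> (xs - x)"
      using tangent[OF cvx grad[rule_format, of x]] by (simp add: g_def)
    then have gi: "g \<bullet> (x - xs) \<ge> \<Delta>" by (simp add: \<Delta>_def inner_diff_right)
    have "g \<bullet> (x - xs) \<le> norm g * norm (x - xs)" by (rule norm_cauchy_schwarz)
    also have "\<dots> \<le> norm g * R" using dist by (simp add: mult_left_mono)
    finally have gR: "\<Delta> \<le> norm g * R" using gi by simp
    then have ng: "\<Delta> / R \<le> norm g" using R_pos by (simp add: field_simps)
    have ngp: "norm g > 0"
    proof (rule ccontr)
      assume "\<not> norm g > 0"
      then have "norm g = 0" using norm_ge_zero[of g] by linarith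
      then show False using gR Dp by simp
    qed
    have first: "f x - f x' \<ge> min (\<Delta>\<^sup>2 / (4 * \<mu> * f x * R\<^sup>2)) (\<Delta> / (2 * \<gamma> * R))"
    proof (cases "\<eta> = 1 / (2 * \<mu> * f x)")
      case True
      have "(\<Delta> / R)\<^sup>2 \<le> (norm g)\<^sup>2" using ng Dp R_pos by (intro power_mono) auto
      then have "(\<Delta> / R)\<^sup>2 / (4 * \<mu> * f x) \<le> (norm g)\<^sup>2 / (4 * \<mu> * f x)"
        using mu_pos fx by (intro divide_right_mono) auto
      also have "\<dots> = \<eta> * (norm g)\<^sup>2 / 2" using True by simp
      finally have c: "(\<Delta> / R)\<^sup>2 / (4 * \<mu> * f x) \<le> f x - f x'"
        using D by linarith
      have "(\<Delta> / R)\<^sup>2 / (4 * \<mu> * f x) = \<Delta>\<^sup>2 / (4 * \<mu> * f x * R\<^sup>2)"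
        by (simp add: power_divide mult_ac)
      with c have "\<Delta>\<^sup>2 / (4 * \<mu> * f x * R\<^sup>2) \<le> f x - f x'" by simp
      then show ?thesis by linarith
    next
      case False
      then have e: "\<eta> = 1 / (\<gamma> * norm g)" using eta3 by auto
      have "\<Delta> / R / (2 * \<gamma>) \<le> norm g / (2 * \<gamma>)"
        using ng gamma_pos by (intro divide_right_mono) auto
      also have "\<dots> = \<eta> * (norm g)\<^sup>2 / 2" using e ngp gamma_pos
        by (simp add: power2_eq_square field_simps)
      finally have c: "\<Delta> / R / (2 * \<gamma>) \<le> f x - f x'"
        using D by linarith
      have "\<Delta> / R / (2 * \<gamma>) = \<Delta> / (2 * \<gamma> * R)" by (simp add: mult.commute)
      with c have "\<Delta> / (2 * \<gamma> * R) \<le> f x - f x'" by (metis mult.commute)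
      then show ?thesis by linarith
    qed
    have second: "norm (x' - xs) \<le> norm (x - xs)" if "f x' > f xs"
    proof -
      have key: "2 * (g \<bullet> (x - xs)) \<ge> \<eta> * (norm g)\<^sup>2"
        using gi D that by (simp add: \<Delta>_def)
      have "(norm (x' - xs))\<^sup>2 = (norm ((x - xs) - \<eta> *\<^sub>R g))\<^sup>2"
        by (simp add: x'_def2 algebra_simps)
      also have "\<dots> = (norm (x - xs))\<^sup>2 - \<eta> * (2 * (g \<bullet> (x - xs)) - \<eta> * (norm g)\<^sup>2)"
        unfolding power2_norm_eq_inner
        by (simp add: inner_diff_left inner_diff_right inner_commute algebra_simps)
      also have "\<dots> \<le> (norm (x - xs))\<^sup>2"
        using key eta_pos by (simp add: mult_nonneg_nonneg)
      finally show ?thesis by (rule power2_le_imp_le) simp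
    qed
    show ?thesis using first second by (simp add: \<Delta>_def)
  qed
  show ?thesis using part1 part3 by auto
qed

end
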